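(* Let $U_\alpha=gE_\alpha g^{-1}$ ($1\le\alpha\le r$) with $g\in G_{<0}$ and $W_\beta=XE_\beta z^{-1}X^{-1}$ ($1\le\beta\le r$) with $X\in G_{\geqslant0}$. Set $B_{m\alpha}:=\pi_{\geqslant0}(U_\alpha z^m)$ ($m\ge0$) and $C_{m\beta}:=\pi_{<0}(W_\beta z^{m+1})$ ($m<0$), and assume that for all $\alpha_1,\alpha_2,\beta_1,\beta_2$: $\partial_{m_1\beta_1}(B_{m_2\alpha_2})-\partial_{m_2\alpha_2}(C_{m_1\beta_1})-[C_{m_1\beta_1},B_{m_2\alpha_2}]=0$ for $m_1<0\le m_2$; $\partial_{m_1\alpha_1}(B_{m_2\alpha_2})-\partial_{m_2\alpha_2}(B_{m_1\alpha_1})-[B_{m_1\alpha_1},B_{m_2\alpha_2}]=0$ for $m_1,m_2\ge0$; $\partial_{m_1\beta_1}(C_{m_2\beta_2})-\partial_{m_2\beta_2}(C_{m_1\beta_1})-[C_{m_1\beta_1},C_{m_2\beta_2}]=0$ for $m_1,m_2<0$. Then $(\{U_\alpha\},\{W_\beta\})$ is a solution of the combined $(\mathrm{sl}_n(\mathbb{C}),\mathfrak{t})$-hierarchy.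
   Context: $R$ is a commutative $\mathbb{C}$-algebra with commuting $\mathbb{C}$-linear derivations $\partial_{m\alpha}$, $m\in\mathbb{Z}$, $1\le\alpha\le r$, acting coefficientwise on matrices and on series. $\mathrm{gl}_n(R)[z,z^{-1})$ consists of formal series $\sum_{i=-\infty}^{N}X_iz^i$ and $\mathrm{gl}_n(R)[z^{-1},z)$ of formal series $\sum_{i=-N}^{\infty}X_iz^i$ ($X_i\in\mathrm{gl}_n(R)$), with bracket $[X,Y]=\sum[X_i,Y_j]z^{i+j}$. $\pi_{\geqslant0}$ (resp. $\pi_{<0}$) keeps the terms with $i\ge0$ (resp. $i<0$). $\mathfrak{t}\subset\mathrm{sl}_n(\mathbb{C})$ is commutative of maximal dimension $r$, basis $E_1,\dots,E_r$. $G_{<0}=\{\mathrm{Id}+\sum_{i\ge1}Y_iz^{-i}\mid Y_i\in\mathrm{gl}_n(R)\}$; $G_{\geqslant0}=\{X_0+\sum_{i\ge1}X_iz^i\mid X_i\in\mathrm{gl}_n(R),\ X_0\text{ invertible}\}$. $(\{U_\alpha\},\{W_\beta\})$ is a solution of the combined $(\mathrm{sl}_n(\mathbb{C}),\mathfrak{t})$-hierarchy if: for all $m\ge0$ and all $\alpha_1,\alpha_2,\beta$: $\partial_{m\alpha_1}(U_{\alpha_2})=[\pi_{\geqslant0}(U_{\alpha_1}z^m),U_{\alpha_2}]$ and $\partial_{m\alpha_1}(W_\beta)=[\pi_{\geqslant0}(U_{\alpha_1}z^m),W_\beta]$; and for all $m<0$ and all $\beta_1,\beta_2,\alpha$: $\partial_{m\beta_1}(W_{\beta_2})=[\pi_{<0}(W_{\beta_1}z^{m+1}),W_{\beta_2}]$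 and $\partial_{m\beta_1}(U_\alpha)=[\pi_{<0}(W_{\beta_1}z^{m+1}),U_\alpha]$. *)

theory Defs
  imports "HOL-Analysis.Analysis" "HOL-Library.Function_Algebras"
begin

text \<open>Matrices over R are 'r^'n^'n (n = CARD('n)). A formal series
  sum_i X_i z^i is a function int => matrix; the two series spaces are singled out
  by support conditions.\<close>

type_synonym ('r, 'n) series = "int \<Rightarrow> 'r^'n^'n"

definition bdd_above_series :: "('r::zero, 'n::finite) series \<Rightarrow> bool" where
  "bdd_above_series X \<longleftrightarrow> (\<exists>N. \<forall>i>N. X i = 0)"

definition bdd_below_series :: "('r::zero, 'n::finite) series \<Rightarrow> bool" where
  "bdd_below_series X \<longleftrightarrow> (\<exists>N. \<forall>i<N. X i = 0)"

text \<open>The sum is taken over the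
  indices with nonzero contributions; for two series in the same space (or one of them
  a Laurent polynomial) this set is finite and the formula is the usual product.\<close>
definition smul :: "('r::comm_ring_1, 'n::finite) series \<Rightarrow> ('r, 'n) series \<Rightarrow> ('r, 'n) series" where
  "smul X Y = (\<lambda>k. \<Sum>i\<in>{i. X i \<noteq> 0 \<and> Y (k - i) \<noteq> 0}. X i ** Y (k - i))"

definition sbracket :: "('r::comm_ring_1, 'n::finite) series \<Rightarrow> ('r, 'n) series \<Rightarrow> ('r, 'n) series" where
  "sbracket X Y = smul X Y - smul Y X"

definition smonom :: "'r::zero^'n::finite^'n \<Rightarrow> int \<Rightarrow> ('r, 'n) series" where
  "smonom A k = (\<lambda>i. if i = k then A else 0)"

definition zshift :: "int \<Rightarrow> ('r::zero, 'n::finite) series \<Rightarrow> ('r, 'n) series" where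
  "zshift m X = (\<lambda>i. X (i - m))"

definition pi_ge0 :: "('r::zero, 'n::finite) series \<Rightarrow> ('r, 'n) series" where
  "pi_ge0 X = (\<lambda>i. if 0 \<le> i then X i else 0)"

definition pi_lt0 :: "('r::zero, 'n::finite) series \<Rightarrow> ('r, 'n) series" where
  "pi_lt0 X = (\<lambda>i. if i < 0 then X i else 0)"

definition sder :: "('r \<Rightarrow> 'r) \<Rightarrow> ('r::zero, 'n::finite) series \<Rightarrow> ('r, 'n) series" where
  "sder d X = (\<lambda>i. \<chi> a b. d (X i $ a $ b))"

definition G_lt0 :: "('r::comm_ring_1, 'n::finite) series \<Rightarrow> bool" where
  "G_lt0 g \<longleftrightarrow> (\<forall>i>0. g i = 0) \<and> g 0 = mat 1"

definition G_ge0 :: "('r::comm_ring_1, 'n::finite) series \<Rightarrow> bool" where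
  "G_ge0 X \<longleftrightarrow> (\<forall>i<0. X i = 0) \<and> invertible (X 0)"

definition calg_hom :: "(complex \<Rightarrow> 'r::comm_ring_1) \<Rightarrow> bool" where
  "calg_hom emb \<longleftrightarrow> emb 1 = 1 \<and> (\<forall>a b. emb (a + b) = emb a + emb b) \<and>
     (\<forall>a b. emb (a * b) = emb a * emb b)"

definition commuting_C_derivations ::
  "(complex \<Rightarrow> 'r::comm_ring_1) \<Rightarrow> nat \<Rightarrow> (int \<Rightarrow> nat \<Rightarrow> 'r \<Rightarrow> 'r) \<Rightarrow> bool" where
  "commuting_C_derivations emb r D \<longleftrightarrow>
     (\<forall>m. \<forall>a\<in>{1..r}.
        (\<forall>x y. D m a (x + y) = D m a x + D m a y) \<and>
        (\<forall>c x. D m a (emb c * x) = emb c * D m a x) \<and>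
        (\<forall>x y. D m a (x * y) = x * D m a y + D m a x * y)) \<and>
     (\<forall>m1 m2. \<forall>a1\<in>{1..r}. \<forall>a2\<in>{1..r}. \<forall>x. D m1 a1 (D m2 a2 x) = D m2 a2 (D m1 a1 x))"

definition embm :: "(complex \<Rightarrow> 'r) \<Rightarrow> complex^'n::finite^'n \<Rightarrow> 'r^'n^'n" where
  "embm emb A = (\<chi> i j. emb (A $ i $ j))"

definition lin_indep_C :: "'i set \<Rightarrow> ('i \<Rightarrow> complex^'n::finite^'n) \<Rightarrow> bool" where
  "lin_indep_C I M \<longleftrightarrow> (\<forall>c. (\<Sum>i\<in>I. mat (c i) ** M i) = 0 \<longrightarrow> (\<forall>i\<in>I. c i = 0))"

text \<open>t = span{E_1..E_r} is a commutative subalgebra of sl_n(C) with basis E_1..E_r,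
  and r is the maximal dimension of a commutative subalgebra of sl_n(C)
  (dimension written out as size of a linearly independent commuting family).\<close>
definition max_comm_basis :: "nat \<Rightarrow> (nat \<Rightarrow> complex^'n::finite^'n) \<Rightarrow> bool" where
  "max_comm_basis r E \<longleftrightarrow>
     (\<forall>a\<in>{1..r}. trace (E a) = 0) \<and>
     (\<forall>a\<in>{1..r}. \<forall>b\<in>{1..r}. E a ** E b = E b ** E a) \<and>
     lin_indep_C {1..r} E \<and>
     (\<forall>(I::nat set) (M::nat \<Rightarrow> complex^'n^'n). finite I \<longrightarrow> (\<forall>i\<in>I. trace (M i) = 0) \<longrightarrow>
        (\<forall>i\<in>I. \<forall>j\<in>I. M i ** M j = M j ** M i) \<longrightarrow> lin_indep_C I M \<longrightarrow> card I \<le> r)"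

definition Bop :: "(nat \<Rightarrow> ('r::comm_ring_1, 'n::finite) series) \<Rightarrow> int \<Rightarrow> nat \<Rightarrow> ('r, 'n) series" where
  "Bop U m a = pi_ge0 (zshift m (U a))"

definition Cop :: "(nat \<Rightarrow> ('r::comm_ring_1, 'n::finite) series) \<Rightarrow> int \<Rightarrow> nat \<Rightarrow> ('r, 'n) series" where
  "Cop W m b = pi_lt0 (zshift (m + 1) (W b))"

definition combined_solution ::
  "nat \<Rightarrow> (int \<Rightarrow> nat \<Rightarrow> 'r::comm_ring_1 \<Rightarrow> 'r) \<Rightarrow> (nat \<Rightarrow> ('r, 'n::finite) series)
     \<Rightarrow> (nat \<Rightarrow> ('r, 'n) series) \<Rightarrow> bool" where
  "combined_solution r D U W \<longleftrightarrow>
     (\<forall>m\<ge>0. \<forall>a1\<in>{1..r}. \<forall>a2\<in>{1..r}.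
        sder (D m a1) (U a2) = sbracket (pi_ge0 (zshift m (U a1))) (U a2)) \<and>
     (\<forall>m\<ge>0. \<forall>a1\<in>{1..r}. \<forall>b\<in>{1..r}.
        sder (D m a1) (W b) = sbracket (pi_ge0 (zshift m (U a1))) (W b)) \<and>
     (\<forall>m<0. \<forall>b1\<in>{1..r}. \<forall>b2\<in>{1..r}.
        sder (D m b1) (W b2) = sbracket (pi_lt0 (zshift (m + 1) (W b1))) (W b2)) \<and>
     (\<forall>m<0. \<forall>b1\<in>{1..r}. \<forall>a\<in>{1..r}.
        sder (D m b1) (U a) = sbracket (pi_lt0 (zshift (m + 1) (W b1))) (U a))"

end

theory Submission
  imports Defs
begin


lemma matrix_add_rdistrib': "((B + C) ** A) = (B ** A) + (C ** A)"
  by (vector matrix_matrix_mult_def sum.distrib[symmetric] field_simps)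

lemma matrix_sum_right: "finite S \<Longrightarrow> (\<Sum>i\<in>S. f i) ** (A::'a::comm_ring_1^'n::finite^'n) = (\<Sum>i\<in>S. f i ** A)"
  by (induction S rule: finite_induct) (auto simp: matrix_add_rdistrib')

lemma matrix_sum_left: "finite S \<Longrightarrow> (A::'a::comm_ring_1^'n::finite^'n) ** (\<Sum>i\<in>S. f i) = (\<Sum>i\<in>S. A ** f i)"
  by (induction S rule: finite_induct) (auto simp: matrix_add_ldistrib)

definition ub :: "int \<Rightarrow> ('r::zero, 'n::finite) series \<Rightarrow> bool" where
  "ub N X \<longleftrightarrow> (\<forall>i>N. X i = 0)"
definition lb :: "int \<Rightarrow> ('r::zero, 'n::finite) series \<Rightarrow> bool" where
  "lb N X \<longleftrightarrow> (\<forall>i<N. X i = 0)"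
definition sset :: "('r::zero, 'n::finite) series \<Rightarrow> ('r, 'n) series \<Rightarrow> int \<Rightarrow> int set" where
  "sset X Y k = {i. X i \<noteq> 0 \<and> Y (k - i) \<noteq> 0}"
definition fin :: "('r::zero, 'n::finite) series \<Rightarrow> ('r, 'n) series \<Rightarrow> bool" where
  "fin X Y \<longleftrightarrow> (\<forall>k. finite (sset X Y k))"

lemma smul_eq_sum:
  fixes X Y :: "('r::comm_ring_1, 'n::finite) series"
  assumes "finite S" "sset X Y k \<subseteq> S"
  shows "smul X Y k = (\<Sum>i\<in>S. X i ** Y (k - i))"
  unfolding smul_def
  apply (rule sum.mono_neutral_left[OF assms(1)])
  using assms(2) by (auto simp: sset_def)

lemma sset_ub: "ub a X \<Longrightarrow> ub b Y \<Longrightarrow> sset X Y k \<subseteq> {k-b..a}"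
  unfolding ub_def sset_def by (auto simp: not_less[symmetric])

lemma sset_lb: "lb a X \<Longrightarrow> lb b Y \<Longrightarrow> sset X Y k \<subseteq> {a..k-b}"
  unfolding lb_def sset_def by (auto simp: not_less[symmetric])

lemma fin_ub: "ub a X \<Longrightarrow> ub b Y \<Longrightarrow> fin X Y"
  unfolding fin_def using sset_ub by (meson finite_atLeastAtMost_int finite_subset)

lemma fin_lb: "lb a X \<Longrightarrow> lb b Y \<Longrightarrow> fin X Y"
  unfolding fin_def using sset_lb by (meson finite_atLeastAtMost_int finite_subset)

lemma smul_ub: "ub a X \<Longrightarrow> ub b Y \<Longrightarrow> ub (a+b) (smul X Y)"
  unfolding ub_def smul_def
  apply clarify
  apply (rule sum.neutral)
  by force

lemma smul_lb: "lb a X \<Longrightarrow> lb b Y \<Longrightarrow> lb (a+b) (smul X Y)"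
  unfolding lb_def smul_def
  apply clarify
  apply (rule sum.neutral)
  by force

lemma smul_add_left:
  fixes X Y Z :: "('r::comm_ring_1, 'n::finite) series"
  assumes "fin X Z" "fin Y Z"
  shows "smul (X + Y) Z = smul X Z + smul Y Z"
proof
  fix k
  let ?S = "sset X Z k \<union> sset Y Z k"
  have f: "finite ?S" using assms by (auto simp: fin_def)
  have "smul (X + Y) Z k = (\<Sum>i\<in>?S. (X + Y) i ** Z (k - i))"
    by (rule smul_eq_sum[OF f]) (auto simp: sset_def)
  also have "\<dots> = (\<Sum>i\<in>?S. X i ** Z (k - i)) + (\<Sum>i\<in>?S. Y i ** Z (k - i))"
    by (simp add: matrix_add_rdistrib' sum.distrib)
  also have "\<dots> = smul X Z k + smul Y Z k"
    by (subst (1 2) smul_eq_sum[OF f]) auto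
  finally show "smul (X + Y) Z k = (smul X Z + smul Y Z) k" by simp
qed

lemma smul_add_right:
  fixes X Y Z :: "('r::comm_ring_1, 'n::finite) series"
  assumes "fin Z X" "fin Z Y"
  shows "smul Z (X + Y) = smul Z X + smul Z Y"
proof
  fix k
  let ?S = "sset Z X k \<union> sset Z Y k"
  have f: "finite ?S" using assms by (auto simp: fin_def)
  have "smul Z (X + Y) k = (\<Sum>i\<in>?S. Z i ** (X + Y) (k - i))"
    by (rule smul_eq_sum[OF f]) (auto simp: sset_def)
  also have "\<dots> = (\<Sum>i\<in>?S. Z i ** X (k - i)) + (\<Sum>i\<in>?S. Z i ** Y (k - i))"
    by (simp add: matrix_add_ldistrib sum.distrib)
  also have "\<dots> = smul Z X k + smul Z Y k"
    by (subst (1 2) smul_eq_sum[OF f]) auto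
  finally show "smul Z (X + Y) k = (smul Z X + smul Z Y) k" by simp
qed

lemma sbr_add_left:
  fixes X Y Z :: "('r::comm_ring_1, 'n::finite) series"
  assumes "fin X Z" "fin Y Z" "fin Z X" "fin Z Y"
  shows "sbracket (X + Y) Z = sbracket X Z + sbracket Y Z"
  unfolding sbracket_def using smul_add_left[OF assms(1,2)] smul_add_right[OF assms(3,4)]
  by (simp add: algebra_simps)

lemma sbr_add_right:
  fixes X Y Z :: "('r::comm_ring_1, 'n::finite) series"
  assumes "fin X Z" "fin Y Z" "fin Z X" "fin Z Y"
  shows "sbracket Z (X + Y) = sbracket Z X + sbracket Z Y"
  unfolding sbracket_def using smul_add_left[OF assms(1,2)] smul_add_right[OF assms(3,4)]
  by (simp add: algebra_simps)

lemma sbr_anti: "sbracket Y X = - sbracket X Y"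
  unfolding sbracket_def by simp

lemma smul_shift_right: "smul X (zshift m Y) = zshift m (smul X Y)"
  unfolding smul_def zshift_def by (simp add: algebra_simps)

lemma smul_shift_left:
  fixes X Y :: "('r::comm_ring_1, 'n::finite) series"
  shows "smul (zshift m X) Y = zshift m (smul X Y)"
proof
  fix k
  show "smul (zshift m X) Y k = zshift m (smul X Y) k"
    unfolding smul_def zshift_def
    by (rule sum.reindex_bij_witness[where i="\<lambda>i. i + m" and j="\<lambda>i. i - m"]) (auto simp: algebra_simps)
qed

lemma sbr_shift_right: "sbracket X (zshift m Y) = zshift m (sbracket X Y)"
  unfolding sbracket_def smul_shift_right smul_shift_left by (simp add: zshift_def fun_eq_iff)

lemma sbr_shift_left: "sbracket (zshift m X) Y = zshift m (sbracket X Y)"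
  unfolding sbracket_def smul_shift_right smul_shift_left by (simp add: zshift_def fun_eq_iff)



lemma smul_eq_sum_shift:
  fixes Y Z :: "('r::comm_ring_1, 'n::finite) series"
  assumes "finite S" "\<And>j. Y (j - t) \<noteq> 0 \<Longrightarrow> Z (m + t - j) \<noteq> 0 \<Longrightarrow> j \<in> S"
  shows "smul Y Z m = (\<Sum>j\<in>S. Y (j - t) ** Z (m + t - j))"
proof -
  have "smul Y Z m = (\<Sum>i\<in>(\<lambda>j. j - t) ` S. Y i ** Z (m - i))"
    apply (rule smul_eq_sum) using assms
    by (auto simp: sset_def image_iff intro!: bexI[where x="_ + t"])
  also have "\<dots> = (\<Sum>j\<in>S. Y (j - t) ** Z (m + t - j))"
    by (subst sum.reindex) (auto simp: inj_on_def algebra_simps)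
  finally show ?thesis .
qed

lemma smul_assoc_ub:
  fixes X Y Z :: "('r::comm_ring_1, 'n::finite) series"
  assumes X: "ub a X" and Y: "ub b Y" and Z: "ub c Z"
  shows "smul (smul X Y) Z = smul X (smul Y Z)"
proof
  fix k
  define I where "I = {k-b-c..a}"
  define J where "J = {k-c..a+b}"
  have fI: "finite I" and fJ: "finite J" by (auto simp: I_def J_def)
  have "smul (smul X Y) Z k = (\<Sum>j\<in>J. smul X Y j ** Z (k - j))"
    by (rule smul_eq_sum[OF fJ]) (use sset_ub[OF smul_ub[OF X Y] Z] in \<open>auto simp: J_def\<close>)
  also have "\<dots> = (\<Sum>j\<in>J. \<Sum>i\<in>I. X i ** Y (j - i) ** Z (k - j))"
  proof (rule sum.cong[OF refl])
    fix j assume j: "j \<in> J"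
    have "smul X Y j = (\<Sum>i\<in>I. X i ** Y (j - i))"
      by (rule smul_eq_sum[OF fI]) (use sset_ub[OF X Y, of j] j in \<open>auto simp: I_def J_def\<close>)
    then show "smul X Y j ** Z (k - j) = (\<Sum>i\<in>I. X i ** Y (j - i) ** Z (k - j))"
      by (simp add: matrix_sum_right[OF fI])
  qed
  also have "\<dots> = (\<Sum>i\<in>I. \<Sum>j\<in>J. X i ** Y (j - i) ** Z (k - j))"
    by (rule sum.swap)
  also have "\<dots> = (\<Sum>i\<in>I. X i ** smul Y Z (k - i))"
  proof (rule sum.cong[OF refl])
    fix i assume i: "i \<in> I"
    have "smul Y Z (k - i) = (\<Sum>j\<in>J. Y (j - i) ** Z (k - i + i - j))"
    proof (rule smul_eq_sum_shift[OF fJ])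
      fix j assume "Y (j - i) \<noteq> 0" "Z (k - i + i - j) \<noteq> 0"
      then show "j \<in> J" using Y Z i unfolding ub_def I_def J_def
        by (auto simp: not_less[symmetric])
    qed
    then show "(\<Sum>j\<in>J. X i ** Y (j - i) ** Z (k - j)) = X i ** smul Y Z (k - i)"
      by (simp add: matrix_sum_left[OF fJ] matrix_mul_assoc)
  qed
  also have "\<dots> = smul X (smul Y Z) k"
    by (rule smul_eq_sum[OF fI, symmetric]) (use sset_ub[OF X smul_ub[OF Y Z], of k] in \<open>auto simp: I_def\<close>)
  finally show "smul (smul X Y) Z k = smul X (smul Y Z) k" .
qed

definition rf :: "('r, 'n) series \<Rightarrow> ('r, 'n) series" where "rf X = (\<lambda>i. X (-i))"

lemma rf_rf[simp]: "rf (rf X) = X" by (simp add: rf_def)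

lemma smul_rf:
  fixes X Y :: "('r::comm_ring_1, 'n::finite) series"
  shows "smul (rf X) (rf Y) = rf (smul X Y)"
proof
  fix k
  show "smul (rf X) (rf Y) k = rf (smul X Y) k"
    unfolding smul_def rf_def
    by (rule sum.reindex_bij_witness[where i="\<lambda>i. - i" and j="\<lambda>i. - i"]) (simp_all add: algebra_simps, metis diff_conv_add_uminus add.commute)
qed

lemma lb_rf: "lb a X \<Longrightarrow> ub (-a) (rf X)"
  by (auto simp: lb_def ub_def rf_def)

lemma smul_assoc_lb:
  fixes X Y Z :: "('r::comm_ring_1, 'n::finite) series"
  assumes X: "lb a X" and Y: "lb b Y" and Z: "lb c Z"
  shows "smul (smul X Y) Z = smul X (smul Y Z)"
proof -
  have "smul (smul (rf X) (rf Y)) (rf Z) = smul (rf X) (smul (rf Y) (rf Z))"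
    by (rule smul_assoc_ub[OF lb_rf[OF X] lb_rf[OF Y] lb_rf[OF Z]])
  then have "rf (rf (smul (smul X Y) Z)) = rf (rf (smul X (smul Y Z)))"
    by (simp add: smul_rf)
  then show ?thesis by simp
qed

lemma smul_monom:
  fixes A B :: "'r::comm_ring_1^'n::finite^'n"
  shows "smul (smonom A p) (smonom B q) = smonom (A ** B) (p + q)"
proof
  fix k
  have "smul (smonom A p) (smonom B q) k = (\<Sum>i\<in>{p}. smonom A p i ** smonom B q (k - i))"
    by (rule smul_eq_sum) (auto simp: sset_def smonom_def split: if_splits)
  then show "smul (smonom A p) (smonom B q) k = smonom (A ** B) (p + q) k"
    by (auto simp: smonom_def)
qed

lemma smul_one_left:
  fixes Y :: "('r::comm_ring_1, 'n::finite) series"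
  shows "smul (smonom (mat 1) 0) Y = Y"
proof
  fix k
  have "smul (smonom (mat 1) 0) Y k = (\<Sum>i\<in>{0}. smonom (mat 1) 0 i ** Y (k - i))"
    by (rule smul_eq_sum) (auto simp: sset_def smonom_def split: if_splits)
  then show "smul (smonom (mat 1) 0) Y k = Y k" by (simp add: smonom_def)
qed

lemma conj_comm:
  fixes g h :: "('r::comm_ring_1, 'n::finite) series"
  assumes assoc: "\<And>x y z. x \<in> S \<Longrightarrow> y \<in> S \<Longrightarrow> z \<in> S \<Longrightarrow> smul (smul x y) z = smul x (smul y z)"
    and cl: "\<And>x y. x \<in> S \<Longrightarrow> y \<in> S \<Longrightarrow> smul x y \<in> S"
    and gS: "g \<in> S" and hS: "h \<in> S" and mS: "\<And>A. smonom A p \<in> S"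
    and inv: "smul h g = smonom (mat 1) 0"
    and AB: "A ** B = B ** A"
  shows "smul (smul (smul g (smonom A p)) h) (smul (smul g (smonom B p)) h)
       = smul (smul (smul g (smonom B p)) h) (smul (smul g (smonom A p)) h)"
proof -
  have key: "smul (smul (smul g (smonom C p)) h) (smul (smul g (smonom D p)) h)
     = smul (smul g (smonom (C ** D) (p + p))) h" for C D
  proof -
    let ?MC = "smonom C p" and ?MD = "smonom D p"
    have S1: "smul g ?MC \<in> S" "smul g ?MD \<in> S" "smul (smul g ?MD) h \<in> S"
      using cl gS hS mS by auto
    have "smul (smul (smul g ?MC) h) (smul (smul g ?MD) h)
        = smul (smul g ?MC) (smul h (smul (smul g ?MD) h))"
      using assoc S1 hS by auto
    also have "smul h (smul (smul g ?MD) h) = smul (smul h (smul g ?MD)) h"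
      using assoc S1 hS by auto
    also have "smul h (smul g ?MD) = smul (smul h g) ?MD"
      using assoc gS hS mS by auto
    also have "\<dots> = ?MD" by (simp add: inv smul_one_left)
    also have "smul (smul g ?MC) (smul ?MD h) = smul (smul (smul g ?MC) ?MD) h"
      using assoc S1 hS mS by auto
    also have "smul (smul g ?MC) ?MD = smul g (smul ?MC ?MD)"
      using assoc gS mS by auto
    finally show ?thesis by (simp add: smul_monom)
  qed
  show ?thesis unfolding key AB ..
qed




lemma ub_mono: fixes X Y F G :: "('r::comm_ring_1,'n::finite) series" shows "ub a X \<Longrightarrow> a \<le> b \<Longrightarrow> ub b X" by (auto simp: ub_def)
lemma lb_mono: fixes X Y F G :: "('r::comm_ring_1,'n::finite) series" shows "lb a X \<Longrightarrow> b \<le> a \<Longrightarrow> lb b X" by (auto simp: lb_def)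
lemma ub_diff: fixes X Y F G :: "('r::comm_ring_1,'n::finite) series" shows "ub a X \<Longrightarrow> ub a Y \<Longrightarrow> ub a (X - Y)" by (auto simp: ub_def)
lemma lb_diff: fixes X Y F G :: "('r::comm_ring_1,'n::finite) series" shows "lb a X \<Longrightarrow> lb a Y \<Longrightarrow> lb a (X - Y)" by (auto simp: lb_def)
lemma ub_uminus: fixes X Y F G :: "('r::comm_ring_1,'n::finite) series" shows "ub a X \<Longrightarrow> ub a (- X)" by (auto simp: ub_def)
lemma lb_uminus: fixes X Y F G :: "('r::comm_ring_1,'n::finite) series" shows "lb a X \<Longrightarrow> lb a (- X)" by (auto simp: lb_def)
lemma ub_zero: fixes X Y F G :: "('r::comm_ring_1,'n::finite) series" shows "ub a (0::('r,'n) series)" by (auto simp: ub_def)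
lemma lb_zero: fixes X Y F G :: "('r::comm_ring_1,'n::finite) series" shows "lb a (0::('r,'n) series)" by (auto simp: lb_def)

lemma sbr_ub: fixes X Y F G :: "('r::comm_ring_1,'n::finite) series" shows "ub a X \<Longrightarrow> ub b Y \<Longrightarrow> ub (a+b) (sbracket X Y)"
  unfolding sbracket_def by (rule ub_diff[OF smul_ub], assumption+) (metis add.commute smul_ub)
lemma sbr_lb: fixes X Y F G :: "('r::comm_ring_1,'n::finite) series" shows "lb a X \<Longrightarrow> lb b Y \<Longrightarrow> lb (a+b) (sbracket X Y)"
  unfolding sbracket_def by (rule lb_diff[OF smul_lb], assumption+) (metis add.commute smul_lb)

lemma ub_shift: fixes X Y F G :: "('r::comm_ring_1,'n::finite) series" shows "ub a X \<Longrightarrow> ub (a + m) (zshift m X)" by (auto simp: ub_def zshift_def)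
lemma lb_shift: fixes X Y F G :: "('r::comm_ring_1,'n::finite) series" shows "lb a X \<Longrightarrow> lb (a + m) (zshift m X)" by (auto simp: lb_def zshift_def)
lemma ub_ge0: fixes X Y F G :: "('r::comm_ring_1,'n::finite) series" shows "ub a X \<Longrightarrow> ub a (pi_ge0 X)" by (auto simp: ub_def pi_ge0_def)
lemma lb_ge0: fixes X Y F G :: "('r::comm_ring_1,'n::finite) series" shows "lb 0 (pi_ge0 X)" by (auto simp: lb_def pi_ge0_def)
lemma ub_lt0: fixes X Y F G :: "('r::comm_ring_1,'n::finite) series" shows "ub (-1) (pi_lt0 X)" by (auto simp: ub_def pi_lt0_def)
lemma lb_lt0: fixes X Y F G :: "('r::comm_ring_1,'n::finite) series" shows "lb a X \<Longrightarrow> lb a (pi_lt0 X)" by (auto simp: lb_def pi_lt0_def)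
lemma ub_monom: fixes X Y F G :: "('r::comm_ring_1,'n::finite) series" shows "ub p (smonom A p)" by (auto simp: ub_def smonom_def)
lemma lb_monom: fixes X Y F G :: "('r::comm_ring_1,'n::finite) series" shows "lb p (smonom A p)" by (auto simp: lb_def smonom_def)

lemma pi_split: fixes X Y F G :: "('r::comm_ring_1,'n::finite) series" shows "pi_ge0 F + pi_lt0 F = F" by (auto simp: pi_ge0_def pi_lt0_def fun_eq_iff)
lemma pi_ge0_ub: fixes X Y F G :: "('r::comm_ring_1,'n::finite) series" shows "ub (-1) X \<Longrightarrow> pi_ge0 X = 0" by (auto simp: ub_def pi_ge0_def fun_eq_iff)
lemma pi_ge0_lb: fixes X Y F G :: "('r::comm_ring_1,'n::finite) series" shows "lb 0 X \<Longrightarrow> pi_ge0 X = X" by (auto simp: lb_def pi_ge0_def fun_eq_iff)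
lemma pi_lt0_lb: fixes X Y F G :: "('r::comm_ring_1,'n::finite) series" shows "lb 0 X \<Longrightarrow> pi_lt0 X = 0" by (auto simp: lb_def pi_lt0_def fun_eq_iff)
lemma pi_lt0_ub: fixes X Y F G :: "('r::comm_ring_1,'n::finite) series" shows "ub (-1) X \<Longrightarrow> pi_lt0 X = X" by (auto simp: ub_def pi_lt0_def fun_eq_iff)

lemma pi_ge0_add: fixes X Y F G :: "('r::comm_ring_1,'n::finite) series" shows "pi_ge0 (F + G) = pi_ge0 F + pi_ge0 G" by (auto simp: pi_ge0_def fun_eq_iff)
lemma pi_ge0_diff: fixes X Y F G :: "('r::comm_ring_1,'n::finite) series" shows "pi_ge0 (F - G) = pi_ge0 F - pi_ge0 G" by (auto simp: pi_ge0_def fun_eq_iff)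
lemma pi_ge0_uminus: fixes X Y F G :: "('r::comm_ring_1,'n::finite) series" shows "pi_ge0 (- F) = - pi_ge0 F" by (auto simp: pi_ge0_def fun_eq_iff)
lemma pi_lt0_add: fixes X Y F G :: "('r::comm_ring_1,'n::finite) series" shows "pi_lt0 (F + G) = pi_lt0 F + pi_lt0 G" by (auto simp: pi_lt0_def fun_eq_iff)
lemma pi_lt0_diff: fixes X Y F G :: "('r::comm_ring_1,'n::finite) series" shows "pi_lt0 (F - G) = pi_lt0 F - pi_lt0 G" by (auto simp: pi_lt0_def fun_eq_iff)
lemma pi_lt0_uminus: fixes X Y F G :: "('r::comm_ring_1,'n::finite) series" shows "pi_lt0 (- F) = - pi_lt0 F" by (auto simp: pi_lt0_def fun_eq_iff)
lemma zshift_add: fixes X Y F G :: "('r::comm_ring_1,'n::finite) series" shows "zshift m (F + G) = zshift m F + zshift m G" by (auto simp: zshift_def fun_eq_iff)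
lemma zshift_zero: fixes X Y F G :: "('r::comm_ring_1,'n::finite) series" shows "zshift m 0 = 0" by (auto simp: zshift_def fun_eq_iff)
lemma zshift_zshift: fixes X Y F G :: "('r::comm_ring_1,'n::finite) series" shows "zshift a (zshift b F) = zshift b (zshift a F)" by (auto simp: zshift_def fun_eq_iff algebra_simps)

lemma sder_ge0: fixes X Y F G :: "('r::comm_ring_1,'n::finite) series" shows "d 0 = 0 \<Longrightarrow> sder d (pi_ge0 F) = pi_ge0 (sder d F)"
  by (auto simp: sder_def pi_ge0_def fun_eq_iff vec_eq_iff)
lemma sder_lt0: fixes X Y F G :: "('r::comm_ring_1,'n::finite) series" shows "d 0 = 0 \<Longrightarrow> sder d (pi_lt0 F) = pi_lt0 (sder d F)"
  by (auto simp: sder_def pi_lt0_def fun_eq_iff vec_eq_iff)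
lemma sder_shift: fixes X Y F G :: "('r::comm_ring_1,'n::finite) series" shows "sder d (zshift m F) = zshift m (sder d F)"
  by (auto simp: sder_def zshift_def fun_eq_iff)
lemma sder_ub: fixes X Y F G :: "('r::comm_ring_1,'n::finite) series" shows "d 0 = 0 \<Longrightarrow> ub a F \<Longrightarrow> ub a (sder d F)"
  by (auto simp: sder_def ub_def vec_eq_iff)
lemma sder_lb: fixes X Y F G :: "('r::comm_ring_1,'n::finite) series" shows "d 0 = 0 \<Longrightarrow> lb a F \<Longrightarrow> lb a (sder d F)"
  by (auto simp: sder_def lb_def vec_eq_iff)

lemma grp_aux: "(a + p) - (b - l) - c = 0 \<Longrightarrow> p + l = (c::'a::ab_group_add) \<Longrightarrow> a = b"
  by (simp add: algebra_simps)

lemma zc1_lemma: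
  fixes U2 W1 :: "('r::comm_ring_1, 'n::finite) series"
  assumes da: "da 0 = 0" and db: "db 0 = 0" and U2: "ub NU U2" and W1: "lb NW W1"
    and m2: "0 \<le> m2"
    and zc: "sder da (pi_ge0 (zshift m2 U2)) - sder db (pi_lt0 (zshift (m1+1) W1))
        - sbracket (pi_lt0 (zshift (m1+1) W1)) (pi_ge0 (zshift m2 U2)) = 0"
  shows "pi_ge0 (zshift m2 (sder da U2 - sbracket (pi_lt0 (zshift (m1+1) W1)) U2))
       = pi_lt0 (zshift (m1+1) (sder db W1 - sbracket (pi_ge0 (zshift m2 U2)) W1))"
proof -
  define B where "B = pi_ge0 (zshift m2 U2)"
  define C where "C = pi_lt0 (zshift (m1+1) W1)"
  define P where "P = pi_lt0 (zshift m2 U2)"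
  define Q where "Q = pi_ge0 (zshift (m1+1) W1)"
  define Y where "Y = sder da U2 - sbracket C U2"
  define Z where "Z = sder db W1 - sbracket B W1"
  have Bu: "ub (NU+m2) B" unfolding B_def by (intro ub_ge0 ub_shift U2)
  have Bl: "lb 0 B" unfolding B_def by (rule lb_ge0)
  have Cu: "ub (-1) C" unfolding C_def by (rule ub_lt0)
  have Cl: "lb (NW+(m1+1)) C" unfolding C_def by (intro lb_lt0 lb_shift W1)
  have Pu: "ub (-1) P" unfolding P_def by (rule ub_lt0)
  have Ql: "lb 0 Q" unfolding Q_def by (rule lb_ge0)
  have sU: "zshift m2 U2 = B + P" unfolding B_def P_def by (rule pi_split[symmetric])
  have sW: "zshift (m1+1) W1 = C + Q" unfolding C_def Q_def by (metis pi_split add.commute)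
  have h1: "sder da B = pi_ge0 (zshift m2 Y) + pi_ge0 (sbracket C B)"
  proof -
    have "sder da B = pi_ge0 (zshift m2 (Y + sbracket C U2))"
      unfolding B_def Y_def by (simp add: sder_ge0[where d=da, OF da] sder_shift)
    also have "\<dots> = pi_ge0 (zshift m2 Y) + pi_ge0 (sbracket C (B + P))"
      by (simp add: zshift_add pi_ge0_add sbr_shift_right[symmetric] sU)
    also have "sbracket C (B + P) = sbracket C B + sbracket C P"
      by (rule sbr_add_right) (use Bu Cu Pu in \<open>auto intro: fin_ub\<close>)
    also have "pi_ge0 (sbracket C B + sbracket C P) = pi_ge0 (sbracket C B)"
      unfolding pi_ge0_add
      using pi_ge0_ub[OF ub_mono[OF sbr_ub[OF Cu Pu]]] by simp
    finally show ?thesis .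
  qed
  have h2: "sder db C = pi_lt0 (zshift (m1+1) Z) - pi_lt0 (sbracket C B)"
  proof -
    have "sder db C = pi_lt0 (zshift (m1+1) (Z + sbracket B W1))"
      unfolding C_def Z_def by (simp add: sder_lt0[where d=db, OF db] sder_shift)
    also have "\<dots> = pi_lt0 (zshift (m1+1) Z) + pi_lt0 (sbracket B (C + Q))"
      by (simp add: zshift_add pi_lt0_add sbr_shift_right[symmetric] sW)
    also have "sbracket B (C + Q) = sbracket B C + sbracket B Q"
      by (rule sbr_add_right) (use Bl Cl Ql in \<open>auto intro: fin_lb\<close>)
    also have "pi_lt0 (sbracket B C + sbracket B Q) = - pi_lt0 (sbracket C B)"
      unfolding pi_lt0_add
      using pi_lt0_lb[OF lb_mono[OF sbr_lb[OF Bl Ql]]] sbr_anti[of B C] pi_lt0_uminus by simp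
    finally show ?thesis by (simp only: diff_conv_add_uminus)
  qed
  have "sder da B - sder db C - sbracket C B = 0" using zc unfolding B_def C_def .
  then have "pi_ge0 (zshift m2 Y) = pi_lt0 (zshift (m1+1) Z)"
    unfolding h1 h2 by (rule grp_aux[OF _ pi_split])
  then show ?thesis unfolding B_def[symmetric] C_def[symmetric] Y_def[symmetric] Z_def[symmetric] .
qed



lemma grp_aux2: "(a + p) - (b + q) - c = 0 \<Longrightarrow> p - q = (c::'a::ab_group_add) \<Longrightarrow> a = b"
  by (simp add: algebra_simps)

lemma grp_aux3: "x + y + z + w = 0 \<Longrightarrow> (x + y) - (-x + -z) = x - (w::'a::ab_group_add)"
  by (simp add: algebra_simps)

lemma expand4:
  fixes B1 P1 B2 P2 :: "('r::comm_ring_1, 'n::finite) series"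
  assumes "fin B1 B2" "fin B1 P2" "fin P1 B2" "fin P1 P2" "fin B2 B1" "fin P2 B1" "fin B2 P1" "fin P2 P1"
    "fin B1 (B2 + P2)" "fin P1 (B2 + P2)" "fin (B2 + P2) B1" "fin (B2 + P2) P1"
  shows "sbracket (B1 + P1) (B2 + P2) = sbracket B1 B2 + sbracket B1 P2 + sbracket P1 B2 + sbracket P1 P2"
  using assms by (simp add: sbr_add_left sbr_add_right add.assoc)

lemma zc2_lemma:
  fixes U1 U2 :: "('r::comm_ring_1, 'n::finite) series"
  assumes da: "da 0 = 0" and db: "db 0 = 0" and U1: "ub N U1" and U2: "ub N U2"
    and comm: "sbracket U1 U2 = 0"
    and zc: "sder da (pi_ge0 (zshift m2 U2)) - sder db (pi_ge0 (zshift m1 U1))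
        - sbracket (pi_ge0 (zshift m1 U1)) (pi_ge0 (zshift m2 U2)) = 0"
  shows "pi_ge0 (zshift m2 (sder da U2 - sbracket (pi_ge0 (zshift m1 U1)) U2))
       = pi_ge0 (zshift m1 (sder db U1 - sbracket (pi_ge0 (zshift m2 U2)) U1))"
proof -
  define B1 where "B1 = pi_ge0 (zshift m1 U1)"
  define B2 where "B2 = pi_ge0 (zshift m2 U2)"
  define P1 where "P1 = pi_lt0 (zshift m1 U1)"
  define P2 where "P2 = pi_lt0 (zshift m2 U2)"
  define Z12 where "Z12 = sder da U2 - sbracket B1 U2"
  define Z21 where "Z21 = sder db U1 - sbracket B2 U1"
  have B1u: "ub (N+m1) B1" unfolding B1_def by (intro ub_ge0 ub_shift U1)
  have B2u: "ub (N+m2) B2" unfolding B2_def by (intro ub_ge0 ub_shift U2)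
  have B1l: "lb 0 B1" "lb 0 B2" unfolding B1_def B2_def by (rule lb_ge0)+
  have Pu: "ub (-1) P1" "ub (-1) P2" unfolding P1_def P2_def by (rule ub_lt0)+
  have sU1: "zshift m1 U1 = B1 + P1" unfolding B1_def P1_def by (rule pi_split[symmetric])
  have sU2: "zshift m2 U2 = B2 + P2" unfolding B2_def P2_def by (rule pi_split[symmetric])
  have S2u: "ub (N+m2) (B2 + P2)" using sU2 ub_shift[OF U2] by metis
  have h1: "sder da B2 = pi_ge0 (zshift m2 Z12) + pi_ge0 (sbracket B1 B2 + sbracket B1 P2)"
  proof -
    have "sder da B2 = pi_ge0 (zshift m2 (Z12 + sbracket B1 U2))"
      unfolding B2_def Z12_def by (simp add: sder_ge0[where d=da, OF da] sder_shift)
    also have "\<dots> = pi_ge0 (zshift m2 Z12) + pi_ge0 (sbracket B1 (B2 + P2))"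
      by (simp add: zshift_add pi_ge0_add sbr_shift_right[symmetric] sU2)
    also have "sbracket B1 (B2 + P2) = sbracket B1 B2 + sbracket B1 P2"
      by (rule sbr_add_right) (use B1u B2u Pu in \<open>auto intro: fin_ub\<close>)
    finally show ?thesis .
  qed
  have h2: "sder db B1 = pi_ge0 (zshift m1 Z21) + pi_ge0 (- sbracket B1 B2 + - sbracket P1 B2)"
  proof -
    have "sder db B1 = pi_ge0 (zshift m1 (Z21 + sbracket B2 U1))"
      unfolding B1_def Z21_def by (simp add: sder_ge0[where d=db, OF db] sder_shift)
    also have "\<dots> = pi_ge0 (zshift m1 Z21) + pi_ge0 (sbracket B2 (B1 + P1))"
      by (simp add: zshift_add pi_ge0_add sbr_shift_right[symmetric] sU1)
    also have "sbracket B2 (B1 + P1) = sbracket B2 B1 + sbracket B2 P1"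
      by (rule sbr_add_right) (use B1u B2u Pu in \<open>auto intro: fin_ub\<close>)
    also have "\<dots> = - sbracket B1 B2 + - sbracket P1 B2"
      by (simp add: sbr_anti[of B2])
    finally show ?thesis .
  qed
  have c0: "sbracket (B1 + P1) (B2 + P2) = 0"
    unfolding sU1[symmetric] sU2[symmetric] sbr_shift_left sbr_shift_right comm zshift_zero ..
  have c4: "sbracket B1 B2 + sbracket B1 P2 + sbracket P1 B2 + sbracket P1 P2 = 0"
    using c0 expand4[of B1 B2 P2 P1] B1u B2u Pu S2u by (auto intro: fin_ub)
  have "pi_ge0 (sbracket B1 B2 + sbracket B1 P2) - pi_ge0 (- sbracket B1 B2 + - sbracket P1 B2)
      = pi_ge0 (sbracket B1 B2 - sbracket P1 P2)"
    unfolding pi_ge0_diff[symmetric] grp_aux3[OF c4] ..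
  also have "\<dots> = sbracket B1 B2"
  proof -
    have x1: "pi_ge0 (sbracket B1 B2) = sbracket B1 B2"
      by (rule pi_ge0_lb) (use sbr_lb[OF B1l(1) B1l(2)] in simp)
    have x2: "pi_ge0 (sbracket P1 P2) = 0"
      by (rule pi_ge0_ub, rule ub_mono[OF sbr_ub[OF Pu(1) Pu(2)]]) simp
    show ?thesis unfolding pi_ge0_diff x1 x2 by simp
  qed
  finally have k: "pi_ge0 (sbracket B1 B2 + sbracket B1 P2) - pi_ge0 (- sbracket B1 B2 + - sbracket P1 B2)
      = sbracket B1 B2" .
  have "sder da B2 - sder db B1 - sbracket B1 B2 = 0" using zc unfolding B1_def B2_def .
  then have "pi_ge0 (zshift m2 Z12) = pi_ge0 (zshift m1 Z21)"
    unfolding h1 h2 by (rule grp_aux2[OF _ k])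
  then show ?thesis unfolding B1_def[symmetric] B2_def[symmetric] Z12_def[symmetric] Z21_def[symmetric] .
qed

lemma zub_lemma:
  fixes U1 U2 :: "('r::comm_ring_1, 'n::finite) series"
  assumes d: "d 0 = 0" and U1: "ub N U1" and U2: "ub N U2" and comm: "sbracket U1 U2 = 0"
  shows "ub N (sder d U2 - sbracket (pi_ge0 (zshift m U1)) U2)"
proof -
  define B1 where "B1 = pi_ge0 (zshift m U1)"
  define P1 where "P1 = pi_lt0 (zshift m U1)"
  have B1u: "ub (N+m) B1" unfolding B1_def by (intro ub_ge0 ub_shift U1)
  have Pu: "ub (-1) P1" unfolding P1_def by (rule ub_lt0)
  have "sbracket B1 U2 + sbracket P1 U2 = sbracket (B1 + P1) U2"
    by (rule sbr_add_left[symmetric]) (use B1u U2 Pu in \<open>auto intro: fin_ub\<close>)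
  also have "B1 + P1 = zshift m U1" unfolding B1_def P1_def by (rule pi_split)
  also have "sbracket (zshift m U1) U2 = 0" unfolding sbr_shift_left comm zshift_zero ..
  finally have "sbracket B1 U2 + sbracket P1 U2 = 0" .
  then have "sbracket B1 U2 = - sbracket P1 U2" by (simp only: add_eq_0_iff2)
  moreover have "ub N (- sbracket P1 U2)"
    by (rule ub_uminus, rule ub_mono[OF sbr_ub[OF Pu U2]]) simp
  ultimately show ?thesis unfolding B1_def[symmetric]
    by (metis ub_diff sder_ub[where d=d, OF d U2])
qed



lemma zc3_lemma:
  fixes W1 W2 :: "('r::comm_ring_1, 'n::finite) series"
  assumes da: "da 0 = 0" and db: "db 0 = 0" and W1: "lb N W1" and W2: "lb N W2"
    and comm: "sbracket W1 W2 = 0"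
    and zc: "sder da (pi_lt0 (zshift (m2+1) W2)) - sder db (pi_lt0 (zshift (m1+1) W1))
        - sbracket (pi_lt0 (zshift (m1+1) W1)) (pi_lt0 (zshift (m2+1) W2)) = 0"
  shows "pi_lt0 (zshift (m2+1) (sder da W2 - sbracket (pi_lt0 (zshift (m1+1) W1)) W2))
       = pi_lt0 (zshift (m1+1) (sder db W1 - sbracket (pi_lt0 (zshift (m2+1) W2)) W1))"
proof -
  define B1 where "B1 = pi_lt0 (zshift (m1+1) W1)"
  define B2 where "B2 = pi_lt0 (zshift (m2+1) W2)"
  define P1 where "P1 = pi_ge0 (zshift (m1+1) W1)"
  define P2 where "P2 = pi_ge0 (zshift (m2+1) W2)"
  define Z12 where "Z12 = sder da W2 - sbracket B1 W2"
  define Z21 where "Z21 = sder db W1 - sbracket B2 W1"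
  have B1u: "lb (N+(m1+1)) B1" unfolding B1_def by (intro lb_lt0 lb_shift W1)
  have B2u: "lb (N+(m2+1)) B2" unfolding B2_def by (intro lb_lt0 lb_shift W2)
  have B1l: "ub (-1) B1" "ub (-1) B2" unfolding B1_def B2_def by (rule ub_lt0)+
  have Pu: "lb 0 P1" "lb 0 P2" unfolding P1_def P2_def by (rule lb_ge0)+
  have sU1: "zshift (m1+1) W1 = B1 + P1" unfolding B1_def P1_def by (metis pi_split add.commute)
  have sU2: "zshift (m2+1) W2 = B2 + P2" unfolding B2_def P2_def by (metis pi_split add.commute)
  have S2u: "lb (N+(m2+1)) (B2 + P2)" using sU2 lb_shift[OF W2] by metis
  have h1: "sder da B2 = pi_lt0 (zshift (m2+1) Z12) + pi_lt0 (sbracket B1 B2 + sbracket B1 P2)"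
  proof -
    have "sder da B2 = pi_lt0 (zshift (m2+1) (Z12 + sbracket B1 W2))"
      unfolding B2_def Z12_def by (simp add: sder_lt0[where d=da, OF da] sder_shift)
    also have "\<dots> = pi_lt0 (zshift (m2+1) Z12) + pi_lt0 (sbracket B1 (B2 + P2))"
      by (simp add: zshift_add pi_lt0_add sbr_shift_right[symmetric] sU2)
    also have "sbracket B1 (B2 + P2) = sbracket B1 B2 + sbracket B1 P2"
      by (rule sbr_add_right) (use B1u B2u Pu in \<open>auto intro: fin_lb\<close>)
    finally show ?thesis .
  qed
  have h2: "sder db B1 = pi_lt0 (zshift (m1+1) Z21) + pi_lt0 (- sbracket B1 B2 + - sbracket P1 B2)"
  proof -
    have "sder db B1 = pi_lt0 (zshift (m1+1) (Z21 + sbracket B2 W1))"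
      unfolding B1_def Z21_def by (simp add: sder_lt0[where d=db, OF db] sder_shift)
    also have "\<dots> = pi_lt0 (zshift (m1+1) Z21) + pi_lt0 (sbracket B2 (B1 + P1))"
      by (simp add: zshift_add pi_lt0_add sbr_shift_right[symmetric] sU1)
    also have "sbracket B2 (B1 + P1) = sbracket B2 B1 + sbracket B2 P1"
      by (rule sbr_add_right) (use B1u B2u Pu in \<open>auto intro: fin_lb\<close>)
    also have "\<dots> = - sbracket B1 B2 + - sbracket P1 B2"
      by (simp add: sbr_anti[of B2])
    finally show ?thesis .
  qed
  have c0: "sbracket (B1 + P1) (B2 + P2) = 0"
    unfolding sU1[symmetric] sU2[symmetric] sbr_shift_left sbr_shift_right comm zshift_zero ..
  have c4: "sbracket B1 B2 + sbracket B1 P2 + sbracket P1 B2 + sbracket P1 P2 = 0"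
    using c0 expand4[of B1 B2 P2 P1] B1u B2u Pu S2u by (auto intro: fin_lb)
  have "pi_lt0 (sbracket B1 B2 + sbracket B1 P2) - pi_lt0 (- sbracket B1 B2 + - sbracket P1 B2)
      = pi_lt0 (sbracket B1 B2 - sbracket P1 P2)"
    unfolding pi_lt0_diff[symmetric] grp_aux3[OF c4] ..
  also have "\<dots> = sbracket B1 B2"
  proof -
    have x1: "pi_lt0 (sbracket B1 B2) = sbracket B1 B2"
      by (rule pi_lt0_ub, rule ub_mono[OF sbr_ub[OF B1l(1) B1l(2)]]) simp
    have x2: "pi_lt0 (sbracket P1 P2) = 0"
      by (rule pi_lt0_lb) (use sbr_lb[OF Pu(1) Pu(2)] in simp)
    show ?thesis unfolding pi_lt0_diff x1 x2 by simp
  qed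
  finally have k: "pi_lt0 (sbracket B1 B2 + sbracket B1 P2) - pi_lt0 (- sbracket B1 B2 + - sbracket P1 B2)
      = sbracket B1 B2" .
  have "sder da B2 - sder db B1 - sbracket B1 B2 = 0" using zc unfolding B1_def B2_def .
  then have "pi_lt0 (zshift (m2+1) Z12) = pi_lt0 (zshift (m1+1) Z21)"
    unfolding h1 h2 by (rule grp_aux2[OF _ k])
  then show ?thesis unfolding B1_def[symmetric] B2_def[symmetric] Z12_def[symmetric] Z21_def[symmetric] .
qed

lemma ylb_lemma:
  fixes W1 W2 :: "('r::comm_ring_1, 'n::finite) series"
  assumes d: "d 0 = 0" and W1: "lb N W1" and W2: "lb N W2" and comm: "sbracket W1 W2 = 0"
  shows "lb N (sder d W2 - sbracket (pi_lt0 (zshift (m+1) W1)) W2)"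
proof -
  define B1 where "B1 = pi_lt0 (zshift (m+1) W1)"
  define P1 where "P1 = pi_ge0 (zshift (m+1) W1)"
  have B1u: "lb (N+(m+1)) B1" unfolding B1_def by (intro lb_lt0 lb_shift W1)
  have Pu: "lb 0 P1" unfolding P1_def by (rule lb_ge0)
  have "sbracket B1 W2 + sbracket P1 W2 = sbracket (B1 + P1) W2"
    by (rule sbr_add_left[symmetric]) (use B1u W2 Pu in \<open>auto intro: fin_lb\<close>)
  also have "B1 + P1 = zshift (m+1) W1" unfolding B1_def P1_def by (metis pi_split add.commute)
  also have "sbracket (zshift (m+1) W1) W2 = 0" unfolding sbr_shift_left comm zshift_zero ..
  finally have "sbracket B1 W2 + sbracket P1 W2 = 0" .
  then have "sbracket B1 W2 = - sbracket P1 W2" by (simp only: add_eq_0_iff2)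
  moreover have "lb N (- sbracket P1 W2)"
    by (rule lb_uminus) (use sbr_lb[OF Pu W2] in simp)
  ultimately show ?thesis unfolding B1_def[symmetric]
    by (metis lb_diff sder_lb[where d=d, OF d W2])
qed



lemma emb_sum:
  assumes "calg_hom emb" "finite S"
  shows "emb (\<Sum>k\<in>S. f k) = (\<Sum>k\<in>S. emb (f k))"
proof -
  have add: "\<And>a b. emb (a + b) = emb a + emb b" using assms(1) by (simp add: calg_hom_def)
  have z: "emb 0 = 0" using add[of 0 0] by simp
  show ?thesis using assms(2) by (induction S rule: finite_induct) (auto simp: z add)
qed

lemma embm_mult:
  fixes A B :: "complex^'n::finite^'n" and emb :: "complex \<Rightarrow> 'r::comm_ring_1"
  assumes "calg_hom emb"
  shows "embm emb (A ** B) = embm emb A ** embm emb B"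
  using assms unfolding embm_def matrix_matrix_mult_def
  by (simp add: vec_eq_iff emb_sum calg_hom_def)

lemma coef_ge0: "pi_ge0 (zshift m F) i = (if 0 \<le> i then F (i - m) else 0)"
  by (simp add: pi_ge0_def zshift_def)
lemma coef_lt0: "pi_lt0 (zshift m F) i = (if i < 0 then F (i - m) else 0)"
  by (simp add: pi_lt0_def zshift_def)

theorem proposition3p2:
  fixes emb :: "complex \<Rightarrow> 'r::comm_ring_1"
    and D :: "int \<Rightarrow> nat \<Rightarrow> 'r \<Rightarrow> 'r"
    and r :: nat
    and E :: "nat \<Rightarrow> complex^'n::finite^'n"
    and g ginv X Xinv :: "('r, 'n) series"
    and U W :: "nat \<Rightarrow> ('r, 'n) series"
  assumes alg: "calg_hom emb"
    and der: "commuting_C_derivations emb r D"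
    and t: "max_comm_basis r E"
    and g: "G_lt0 g" "bdd_above_series ginv"
           "smul g ginv = smonom (mat 1) 0" "smul ginv g = smonom (mat 1) 0"
    and X: "G_ge0 X" "bdd_below_series Xinv"
           "smul X Xinv = smonom (mat 1) 0" "smul Xinv X = smonom (mat 1) 0"
    and U: "\<And>a. a \<in> {1..r} \<Longrightarrow> U a = smul (smul g (smonom (embm emb (E a)) 0)) ginv"
    and W: "\<And>b. b \<in> {1..r} \<Longrightarrow> W b = smul (smul X (smonom (embm emb (E b)) (-1))) Xinv"
    and zc1: "\<And>m1 m2 b1 a2. m1 < 0 \<Longrightarrow> 0 \<le> m2 \<Longrightarrow> b1 \<in> {1..r} \<Longrightarrow> a2 \<in> {1..r} \<Longrightarrow>
       sder (D m1 b1) (Bop U m2 a2) - sder (D m2 a2) (Cop W m1 b1)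
         - sbracket (Cop W m1 b1) (Bop U m2 a2) = 0"
    and zc2: "\<And>m1 m2 a1 a2. 0 \<le> m1 \<Longrightarrow> 0 \<le> m2 \<Longrightarrow> a1 \<in> {1..r} \<Longrightarrow> a2 \<in> {1..r} \<Longrightarrow>
       sder (D m1 a1) (Bop U m2 a2) - sder (D m2 a2) (Bop U m1 a1)
         - sbracket (Bop U m1 a1) (Bop U m2 a2) = 0"
    and zc3: "\<And>m1 m2 b1 b2. m1 < 0 \<Longrightarrow> m2 < 0 \<Longrightarrow> b1 \<in> {1..r} \<Longrightarrow> b2 \<in> {1..r} \<Longrightarrow>
       sder (D m1 b1) (Cop W m2 b2) - sder (D m2 b2) (Cop W m1 b1)
         - sbracket (Cop W m1 b1) (Cop W m2 b2) = 0"
  shows "combined_solution r D U W"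
proof -
  have D0: "D m a 0 = 0" if "a \<in> {1..r}" for m a
  proof -
    have "D m a (0 + 0) = D m a 0 + D m a 0" using der that unfolding commuting_C_derivations_def by blast
    then show ?thesis by simp
  qed
  obtain Ng where Ng: "ub Ng ginv" using g(2) by (auto simp: bdd_above_series_def ub_def)
  obtain Nx where Nx: "lb Nx Xinv" using X(2) by (auto simp: bdd_below_series_def lb_def)
  have gu: "ub 0 g" using g(1) by (auto simp: G_lt0_def ub_def)
  have Xl: "lb 0 X" using X(1) by (auto simp: G_ge0_def lb_def)
  have Uu: "ub Ng (U a)" if "a \<in> {1..r}" for a
    using smul_ub[OF smul_ub[OF gu ub_monom[where p=0]] Ng] U[OF that] by simp
  define Nw where "Nw = Nx - 1"
  have Wl: "lb Nw (W b)" if "b \<in> {1..r}" for b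
    using smul_lb[OF smul_lb[OF Xl lb_monom[where p="-1"]] Nx] W[OF that] by (simp add: Nw_def)
  have Ecomm: "embm emb (E a) ** embm emb (E b) = embm emb (E b) ** embm emb (E a)"
    if "a \<in> {1..r}" "b \<in> {1..r}" for a b
    using t that by (simp add: embm_mult[OF alg, symmetric] max_comm_basis_def)
  have Ucomm: "sbracket (U a) (U b) = 0" if ab: "a \<in> {1..r}" "b \<in> {1..r}" for a b
  proof -
    have "smul (U a) (U b) = smul (U b) (U a)"
      unfolding U[OF ab(1)] U[OF ab(2)]
      by (rule conj_comm[where S="{x. \<exists>N. ub N x}"])
         (use smul_assoc_ub smul_ub gu Ng ub_monom g(4) Ecomm[OF ab] in blast)+
    then show ?thesis by (simp add: sbracket_def)
  qed
  have Wcomm: "sbracket (W a) (W b) = 0" if ab: "a \<in> {1..r}" "b \<in> {1..r}" for a b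
  proof -
    have "smul (W a) (W b) = smul (W b) (W a)"
      unfolding W[OF ab(1)] W[OF ab(2)]
      by (rule conj_comm[where S="{x. \<exists>N. lb N x}"])
         (use smul_assoc_lb smul_lb Xl Nx lb_monom X(4) Ecomm[OF ab] in blast)+
    then show ?thesis by (simp add: sbracket_def)
  qed
  show ?thesis
    unfolding combined_solution_def
  proof (intro conjI allI impI ballI)
    fix m :: int and a1 a2 :: nat
    assume m: "0 \<le> m" and a1: "a1 \<in> {1..r}" and a2: "a2 \<in> {1..r}"
    define Z where "Z = sder (D m a1) (U a2) - sbracket (pi_ge0 (zshift m (U a1))) (U a2)"
    have "Z k = 0" for k
    proof (cases "k > Ng")
      case True
      then show ?thesis using zub_lemma[where d="D m a1", OF D0[OF a1] Uu[OF a1] Uu[OF a2] Ucomm[OF a1 a2]]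
        unfolding Z_def ub_def by blast
    next
      case False
      define m2 where "m2 = max 0 (max (-k) (Ng + m - k + 1))"
      have m2: "0 \<le> m2" by (simp add: m2_def)
      have e: "pi_ge0 (zshift m2 Z) = pi_ge0 (zshift m (sder (D m2 a2) (U a1)
                 - sbracket (pi_ge0 (zshift m2 (U a2))) (U a1)))"
        unfolding Z_def
        by (rule zc2_lemma[where da="D m a1" and db="D m2 a2", OF D0[OF a1] D0[OF a2] Uu[OF a1] Uu[OF a2] Ucomm[OF a1 a2]])
           (use zc2[OF m m2 a1 a2] in \<open>simp add: Bop_def\<close>)
      have z: "(sder (D m2 a2) (U a1) - sbracket (pi_ge0 (zshift m2 (U a2))) (U a1)) (k + m2 - m) = 0"
        using zub_lemma[where d="D m2 a2", OF D0[OF a2] Uu[OF a2] Uu[OF a1] Ucomm[OF a2 a1], of m2]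
        unfolding ub_def by (auto simp: m2_def)
      have "k + m2 \<ge> 0" by (simp add: m2_def)
      then show ?thesis using fun_cong[OF e, of "k + m2"] z unfolding coef_ge0 by (simp add: algebra_simps)
    qed
    then show "sder (D m a1) (U a2) = sbracket (pi_ge0 (zshift m (U a1))) (U a2)"
      unfolding Z_def by (simp add: fun_eq_iff)
  next
    fix m :: int and a1 b :: nat
    assume m: "0 \<le> m" and a1: "a1 \<in> {1..r}" and b: "b \<in> {1..r}"
    define Z where "Z = sder (D m a1) (W b) - sbracket (pi_ge0 (zshift m (U a1))) (W b)"
    have "Z k = 0" for k
    proof -
      define m1 where "m1 = - \<bar>k\<bar> - 2"
      have m1: "m1 < 0" by (simp add: m1_def)
      have e: "pi_ge0 (zshift m (sder (D m1 b) (U a1) - sbracket (pi_lt0 (zshift (m1+1) (W b))) (U a1)))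
          = pi_lt0 (zshift (m1+1) Z)"
        unfolding Z_def
        by (rule zc1_lemma[where da="D m1 b" and db="D m a1", OF D0[OF b] D0[OF a1] Uu[OF a1] Wl[OF b] m])
           (use zc1[OF m1 m b a1] in \<open>simp add: Bop_def Cop_def\<close>)
      have "k + m1 + 1 < 0" by (simp add: m1_def)
      then show ?thesis using fun_cong[OF e, of "k + m1 + 1"] unfolding coef_ge0 coef_lt0
        by (simp add: algebra_simps)
    qed
    then show "sder (D m a1) (W b) = sbracket (pi_ge0 (zshift m (U a1))) (W b)"
      unfolding Z_def by (simp add: fun_eq_iff)
  next
    fix m :: int and b1 b2 :: nat
    assume m: "m < 0" and b1: "b1 \<in> {1..r}" and b2: "b2 \<in> {1..r}"
    define Y where "Y = sder (D m b1) (W b2) - sbracket (pi_lt0 (zshift (m + 1) (W b1))) (W b2)"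
    have "Y k = 0" for k
    proof (cases "k < Nw")
      case True
      then show ?thesis using ylb_lemma[where d="D m b1", OF D0[OF b1] Wl[OF b1] Wl[OF b2] Wcomm[OF b1 b2]]
        unfolding Y_def lb_def by blast
    next
      case False
      define m2 where "m2 = min (-1) (min (-k-2) (Nw + m - k - 1))"
      have m2: "m2 < 0" by (simp add: m2_def)
      have e: "pi_lt0 (zshift (m2+1) Y) = pi_lt0 (zshift (m+1) (sder (D m2 b2) (W b1)
                 - sbracket (pi_lt0 (zshift (m2+1) (W b2))) (W b1)))"
        unfolding Y_def
        by (rule zc3_lemma[where da="D m b1" and db="D m2 b2", OF D0[OF b1] D0[OF b2] Wl[OF b1] Wl[OF b2] Wcomm[OF b1 b2]])
           (use zc3[OF m m2 b1 b2] in \<open>simp add: Cop_def\<close>)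
      have z: "(sder (D m2 b2) (W b1) - sbracket (pi_lt0 (zshift (m2+1) (W b2))) (W b1)) (k + m2 - m) = 0"
        using ylb_lemma[where d="D m2 b2", OF D0[OF b2] Wl[OF b2] Wl[OF b1] Wcomm[OF b2 b1], of m2]
        unfolding lb_def by (auto simp: m2_def)
      have "k + m2 + 1 < 0" by (simp add: m2_def)
      then show ?thesis using fun_cong[OF e, of "k + m2 + 1"] z unfolding coef_lt0 by (simp add: algebra_simps)
    qed
    then show "sder (D m b1) (W b2) = sbracket (pi_lt0 (zshift (m + 1) (W b1))) (W b2)"
      unfolding Y_def by (simp add: fun_eq_iff)
  next
    fix m :: int and b1 a :: nat
    assume m: "m < 0" and b1: "b1 \<in> {1..r}" and a: "a \<in> {1..r}"
    define Y where "Y = sder (D m b1) (U a) - sbracket (pi_lt0 (zshift (m + 1) (W b1))) (U a)"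
    have "Y k = 0" for k
    proof -
      define m2 where "m2 = \<bar>k\<bar>"
      have m2: "0 \<le> m2" by (simp add: m2_def)
      have e: "pi_ge0 (zshift m2 Y)
          = pi_lt0 (zshift (m+1) (sder (D m2 a) (W b1) - sbracket (pi_ge0 (zshift m2 (U a))) (W b1)))"
        unfolding Y_def
        by (rule zc1_lemma[where da="D m b1" and db="D m2 a", OF D0[OF b1] D0[OF a] Uu[OF a] Wl[OF b1] m2])
           (use zc1[OF m m2 b1 a] in \<open>simp add: Bop_def Cop_def\<close>)
      have "k + m2 \<ge> 0" by (simp add: m2_def)
      then show ?thesis using fun_cong[OF e, of "k + m2"] unfolding coef_ge0 coef_lt0
        by (simp add: algebra_simps)
    qed
    then show "sder (D m b1) (U a) = sbracket (pi_lt0 (zshift (m + 1) (W b1))) (U a)"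
      unfolding Y_def by (simp add: fun_eq_iff)
  qed
qed



end
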